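(* Let $\{\Theta(k)\}_{k=0}^{\infty}$ be a bounded sequence of complex numbers, and let $\upsilon\in\mathbb{C}$ with $\operatorname{Re}(\upsilon)>0$, $c>0$, $y>0$, and $\lambda,b$ real with $\lambda b>0$ (i.e. $\lambda>0,b>0$ or $\lambda<0,b<0$). Define $$\mathbf{I}^{*}_{C}(\upsilon,b,c,\lambda,y)=\sum_{k=0}^{\infty}\left[\frac{\Theta(k)}{k!}\int_{0}^{\infty}x^{\upsilon-1}e^{-(\lambda b+ck)\sqrt{x}}\cos(xy)\,dx\right].$$ Then $$\mathbf{I}^{*}_{C}(\upsilon,b,c,\lambda,y)=y^{-\upsilon}\sum_{k=0}^{\infty}\left[\frac{\Theta(k)}{k!}\sum_{\ell=0}^{\infty}\frac{(-1)^{\ell}(\lambda b+ck)^{\ell}\,\Gamma\!\left(\upsilon+\frac{\ell}{2}\right)}{y^{\ell/2}\,\ell!}\cos\!\left(\frac{\upsilon\pi}{2}+\frac{\ell\pi}{4}\right)\right],$$ and also $$\mathbf{I}^{*}_{C}(\upsilon,b,c,\lambda,y)=y^{-\upsilon}\sum_{k=0}^{\infty}\left[\frac{\Theta(k)}{k!}\sum_{j=0}^{3}\frac{(-1)^{j}(\lambda b+ck)^{j}\,\Gamma\!\left(\upsilon+\frac{j}{2}\right)}{y^{j/2}\,j!}\cos\!\left(\frac{\upsilon\pi}{2}+\frac{j\pi}{4}\right)\,F_j\!\left(-\frac{(\lambda b+ck)^{4}}{64y^{2}}\right)\right],$$ where $F_0(z)={}_{2}F_{3}\!\left(\tfrac{\upsilon}{2},\tfrac{\upsilon+1}{2};\tfrac14,\tfrac12,\tfrac34;z\right)$,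 $F_1(z)={}_{2}F_{3}\!\left(\tfrac{2\upsilon+1}{4},\tfrac{2\upsilon+3}{4};\tfrac12,\tfrac34,\tfrac54;z\right)$, $F_2(z)={}_{2}F_{3}\!\left(\tfrac{\upsilon+1}{2},\tfrac{\upsilon+2}{2};\tfrac34,\tfrac54,\tfrac32;z\right)$, $F_3(z)={}_{2}F_{3}\!\left(\tfrac{2\upsilon+3}{4},\tfrac{2\upsilon+5}{4};\tfrac54,\tfrac32,\tfrac74;z\right)$. (Note $\lambda b+ck=\lambda b\,\frac{((\lambda b+c)/c)_k}{(\lambda b/c)_k}$, which is the form in which the paper writes the argument.) *)

theory Defs
  imports "HOL-Analysis.Analysis"
begin

definition hyp2F3 :: "complex \<Rightarrow> complex \<Rightarrow> complex \<Rightarrow> complex \<Rightarrow> complex \<Rightarrow> complex \<Rightarrow> complex" where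
  "hyp2F3 a1 a2 b1 b2 b3 z =
     (\<Sum>n. pochhammer a1 n * pochhammer a2 n /
           (pochhammer b1 n * pochhammer b2 n * pochhammer b3 n * fact n) * z ^ n)"

definition Icos :: "complex \<Rightarrow> real \<Rightarrow> real \<Rightarrow> complex" where
  "Icos v a y = integral {0<..}
     (\<lambda>x::real. of_real x powr (v - 1) * of_real (exp (- a * sqrt x)) * of_real (cos (x * y)))"

end

theory Submission
  imports Defs "HOL-Complex_Analysis.Complex_Analysis"
begin


lemma exp_ge_pow: "0 \<le> u \<Longrightarrow> u^n / fact n \<le> exp (u::real)"
proof -
  assume u: "0 \<le> u"
  have s: "(\<lambda>k. u^k /\<^sub>R fact k) sums exp u" by (rule exp_converges)
  have "u^n / fact n = (\<Sum>k\<in>{n}. u^k /\<^sub>R fact k)" by (simp add: divide_inverse_commute)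
  also have "\<dots> \<le> (\<Sum>k. u^k /\<^sub>R fact k)"
    using s u by (intro sum_le_suminf) (auto simp: sums_iff)
  also have "\<dots> = exp u" using s by (simp add: sums_iff)
  finally show ?thesis .
qed

lemma int_powr_exp:
  fixes p r :: real
  assumes "p > -1" "r > 0"
  shows "(\<lambda>x. x powr p * exp (-(r*x))) integrable_on {0<..}"
proof -
  have "(\<lambda>t. complex_of_real t powr (of_real (p+1) - 1) / of_real (exp (r * t))) absolutely_integrable_on {0<..}"
    using assms by (intro absolutely_integrable_Gamma_integral) auto
  hence "(\<lambda>t. norm (complex_of_real t powr (of_real (p+1) - 1) / of_real (exp (r * t)))) integrable_on {0<..}"
    by (simp add: absolutely_integrable_on_def)
  thus ?thesis
    by (rule integrable_eq) (auto simp: norm_divide norm_powr_real_powr exp_minus field_simps)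
qed



lemma norm_exp_sub: "norm (exp z - 1 - z) \<le> norm z ^ 2 * exp (norm (z::complex))"
proof -
  have sums: "(\<lambda>k. z ^ (k + 2) /\<^sub>R fact (k + 2)) sums (exp z - (\<Sum>k<2. z ^ k /\<^sub>R fact k))"
    by (intro sums_split_initial_segment exp_converges)
  have summable: "summable (\<lambda>k. norm z ^ k / fact (k + 2))"
  proof (rule summable_comparison_test[OF _ summable_exp[of "norm z"]])
    show "\<exists>N. \<forall>n\<ge>N. norm (norm z ^ n / fact (n + 2)) \<le> inverse (fact n) * norm z ^ n"
    proof (intro exI[of _ 0] allI impI)
      fix n :: nat
      have "norm z ^ n / fact (n + 2) \<le> norm z ^ n / fact n" by (intro divide_left_mono fact_mono) auto
      thus "norm (norm z ^ n / fact (n + 2)) \<le> inverse (fact n) * norm z ^ n"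
        by (simp add: field_simps)
    qed
  qed
  have "exp z - 1 - z = (\<Sum>k. z ^ (k + 2) / fact (k + 2))"
    using sums by (simp add: sums_iff scaleR_conv_of_real divide_simps eval_nat_numeral)
  also have "norm \<dots> \<le> (\<Sum>k. norm (z ^ (k + 2) / fact (k + 2)))"
    using summable_norm_exp[of z]
    by (intro summable_norm summable_ignore_initial_segment)
       (auto simp: norm_power norm_divide divide_simps)
  also have "\<dots> = (\<Sum>k. norm z ^ 2 * (norm z ^ k / fact (k + 2)))"
    by (simp add: power_add norm_power norm_divide mult_ac norm_mult power2_eq_square del: of_nat_Suc)
  also have "\<dots> = norm z ^ 2 * (\<Sum>k. norm z ^ k / fact (k + 2))"
    using summable by (rule suminf_mult)
  also have "\<dots> \<le> norm z ^ 2 * exp (norm z)"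
  proof (intro mult_left_mono, rule sums_le)
    show "(\<lambda>k. norm z ^ k / fact (k + 2)) sums (\<Sum>k. norm z ^ k / fact (k + 2))"
      using summable by blast
    show "(\<lambda>k. norm z ^ k /\<^sub>R fact k) sums exp (norm z)" by (rule exp_converges)
  next
    fix k :: nat
    have "norm z ^ k / fact (k + 2) \<le> norm z ^ k / fact k" by (intro divide_left_mono fact_mono) auto
    thus "norm z ^ k / fact (k + 2) \<le> norm z ^ k /\<^sub>R fact k"
      by (simp add: field_simps)
  qed auto
  finally show ?thesis .
qed

lemma norm_ofreal_powr: "x > 0 \<Longrightarrow> norm (complex_of_real x powr s) = x powr Re s"
  by (simp add: norm_powr_real_powr)

lemma cint:
  fixes s w :: complex
  assumes "Re s > 0" "Re w > 0"
  shows "(\<lambda>x. of_real x powr (s-1) * exp (-(w * of_real x))) absolutely_integrable_on {0<..}"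
proof (rule measurable_bounded_by_integrable_imp_absolutely_integrable)
  show "(\<lambda>x. of_real x powr (s-1) * exp (-(w * of_real x))) \<in> borel_measurable (lebesgue_on {0<..})"
    by (intro continuous_imp_measurable_on_sets_lebesgue continuous_intros) auto
  show "(\<lambda>x. x powr (Re s - 1) * exp (-(Re w * x))) integrable_on {0<..}"
    using assms by (intro int_powr_exp) auto
  fix x :: real assume "x \<in> {0<..}"
  thus "norm (of_real x powr (s-1) * exp (-(w * of_real x))) \<le> x powr (Re s - 1) * exp (-(Re w * x))"
    by (simp add: norm_mult norm_ofreal_powr)
qed auto



lemma cpowr_m1: "x > 0 \<Longrightarrow> (of_real x::complex) powr s = of_real x * of_real x powr (s - 1)"
proof -
  assume x: "x > 0"
  have "(of_real x::complex) powr s = of_real x powr ((s-1) + 1)" by simp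
  also have "\<dots> = of_real x powr (s-1) * of_real x powr 1" by (rule powr_add)
  also have "\<dots> = of_real x * of_real x powr (s - 1)" using x by simp
  finally show ?thesis .
qed

lemma Lhol:
  fixes s :: complex assumes s: "Re s > 0"
  shows "(\<lambda>w. integral {0<..} (\<lambda>x. of_real x powr (s-1) * exp (-(w * of_real x)))) holomorphic_on {w. Re w > 0}"
proof -
  define g where "g = (\<lambda>w x. of_real x powr (s-1) * exp (-(w * of_real x)))"
  define L where "L = (\<lambda>w. integral {0<..} (g w))"
  have gi: "g w integrable_on {0<..}" if "Re w > 0" for w
    using cint[OF s that] unfolding g_def using set_lebesgue_integral_eq_integral(1) by blast
  have "(L has_field_derivative integral {0<..} (\<lambda>x. -(of_real x) * g w x)) (at w)" if w: "Re w > 0" for w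
  proof -
    define r where "r = Re w / 2"
    have r: "r > 0" using w by (simp add: r_def)
    define D where "D = integral {0<..} (\<lambda>x. -(of_real x) * g w x)"
    define C where "C = integral {0<..} (\<lambda>x. x powr (Re s + 1) * exp (-(r*x)))"
    have Ci: "(\<lambda>x. x powr (Re s + 1) * exp (-(r*x))) integrable_on {0<..}"
      using s r by (intro int_powr_exp) auto
    have Di: "(\<lambda>x. -(of_real x) * g w x) integrable_on {0<..}"
    proof -
      have "(\<lambda>x. of_real x powr ((s+1)-1) * exp (-(w * of_real x))) integrable_on {0<..}"
        using cint[of "s+1" w] s w set_lebesgue_integral_eq_integral(1) by force
      hence "(\<lambda>x. - (of_real x powr ((s+1)-1) * exp (-(w * of_real x)))) integrable_on {0<..}"
        by (rule integrable_neg)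
      thus ?thesis
        by (rule integrable_eq) (auto simp: g_def cpowr_m1[of _ s])
    qed
    have bound: "norm ((L u - L w) / (u - w) - D) \<le> norm (u - w) * C"
      if u: "u \<noteq> w" "norm (u - w) < r" for u
    proof -
      define h where "h = u - w"
      have h0: "h \<noteq> 0" using u by (simp add: h_def)
      have Reu: "Re u > 0"
      proof -
        have "Re (w - u) \<le> norm (u - w)" using complex_Re_le_cmod[of "w-u"] by (simp add: norm_minus_commute)
        thus ?thesis using u(2) w by (simp add: r_def)
      qed
      have gu: "g u x = g w x * exp (-(h * of_real x))" for x
      proof -
        have "-(u * of_real x) = -(w * of_real x) + -(h * of_real x)" by (simp add: h_def algebra_simps)
        hence "exp (-(u * of_real x)) = exp (-(w * of_real x)) * exp (-(h * of_real x))"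
          by (metis exp_add)
        thus ?thesis by (simp add: g_def mult.assoc)
      qed
      have eq: "L u - L w - h * D = integral {0<..} (\<lambda>x. g w x * (exp (-(h * of_real x)) - 1 - (-(h * of_real x))))"
      proof -
        have "L u - L w - h * D = integral {0<..} (\<lambda>x. g u x - g w x - h * (-(of_real x) * g w x))"
        proof -
          have i1: "(\<lambda>x. g u x - g w x) integrable_on {0<..}" by (intro integrable_diff gi Reu w)
          have i2: "(\<lambda>x. h * (-(of_real x) * g w x)) integrable_on {0<..}" by (intro integrable_on_mult_right Di)
          have "integral {0<..} (\<lambda>x. g u x - g w x - h * (-(of_real x) * g w x))
             = integral {0<..} (\<lambda>x. g u x - g w x) - integral {0<..} (\<lambda>x. h * (-(of_real x) * g w x))"
            by (rule integral_diff[OF i1 i2])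
          also have "integral {0<..} (\<lambda>x. g u x - g w x) = L u - L w"
            unfolding L_def by (rule integral_diff[OF gi gi]) (use Reu w in auto)
          also have "integral {0<..} (\<lambda>x. h * (-(of_real x) * g w x)) = h * D"
            unfolding D_def by (rule integral_mult_right)
          finally show ?thesis by simp
        qed
        also have "\<dots> = integral {0<..} (\<lambda>x. g w x * (exp (-(h * of_real x)) - 1 - (-(h * of_real x))))"
          by (intro integral_cong) (simp add: gu algebra_simps)
        finally show ?thesis .
      qed
      have "norm (L u - L w - h * D) \<le> integral {0<..} (\<lambda>x. norm h ^ 2 * (x powr (Re s + 1) * exp (-(r*x))))"
        unfolding eq
      proof (rule integral_norm_bound_integral)
        show "(\<lambda>x. g w x * (exp (-(h * of_real x)) - 1 - (-(h * of_real x)))) integrable_on {0<..}"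
        proof -
          have "(\<lambda>x. g u x - g w x - h * (-(of_real x) * g w x)) integrable_on {0<..}"
            by (intro integrable_diff gi Reu w integrable_on_mult_right Di)
          thus ?thesis
            by (rule integrable_eq) (simp add: gu algebra_simps)
        qed
        show "(\<lambda>x. norm h ^ 2 * (x powr (Re s + 1) * exp (-(r*x)))) integrable_on {0<..}"
          using Ci by (rule integrable_on_mult_right)
      next
        fix x :: real assume x: "x \<in> {0<..}"
        have "norm (g w x * (exp (-(h * of_real x)) - 1 - (-(h * of_real x))))
              \<le> (x powr (Re s - 1) * exp (-(Re w * x))) * (norm (h * of_real x) ^ 2 * exp (norm (h * of_real x)))"
          unfolding norm_mult[of "g w x"]
        proof (rule mult_mono)
          show "norm (exp (-(h * of_real x)) - 1 - (-(h * of_real x))) \<le> norm (h * of_real x) ^ 2 * exp (norm (h * of_real x))"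
            using norm_exp_sub[of "-(h * of_real x)"] by (simp only: norm_minus_cancel)
        qed (use x in \<open>auto simp: g_def norm_mult norm_ofreal_powr\<close>)
        also have "\<dots> = norm h ^ 2 * ((x powr (Re s - 1) * x ^ 2) * (exp (-(Re w * x)) * exp (norm h * x)))"
          using x by (simp add: norm_mult power_mult_distrib)
        also have "x powr (Re s - 1) * x ^ 2 = x powr (Re s + 1)"
        proof -
          have "x ^ 2 = x powr 2" using x by simp
          hence "x powr (Re s - 1) * x ^ 2 = x powr (Re s - 1 + 2)" by (simp only: powr_add)
          thus ?thesis by (simp add: add.commute)
        qed
        also have "exp (-(Re w * x)) * exp (norm h * x) \<le> exp (-(r*x))"
          unfolding exp_add[symmetric]
          using x u(2) by (auto simp: h_def r_def algebra_simps intro!: mult_right_mono)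
        finally show "norm (g w x * (exp (-(h * of_real x)) - 1 - (-(h * of_real x))))
              \<le> norm h ^ 2 * (x powr (Re s + 1) * exp (-(r*x)))"
          by (simp add: mult_left_mono)
      qed
      also have "\<dots> = norm h ^ 2 * C" by (simp add: C_def)
      finally have "norm (L u - L w - h * D) \<le> norm h ^ 2 * C" .
      moreover have "(L u - L w) / (u - w) - D = (L u - L w - h * D) / h"
        using h0 by (simp add: h_def field_simps)
      ultimately show ?thesis
        using h0 by (simp add: norm_divide divide_simps power2_eq_square h_def mult_ac)
    qed
    have "((\<lambda>u. (L u - L w) / (u - w) - D) \<longlongrightarrow> 0) (at w)"
    proof (rule Lim_null_comparison)
      show "eventually (\<lambda>u. norm ((L u - L w) / (u - w) - D) \<le> norm (u - w) * C) (at w)"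
        unfolding eventually_at using r bound by (intro exI[of _ r]) (auto simp: dist_norm)
      show "((\<lambda>u. norm (u - w) * C) \<longlongrightarrow> 0) (at w)"
        by (rule tendsto_eq_intros refl | simp)+
    qed
    hence "((\<lambda>u. (L u - L w) / (u - w)) \<longlongrightarrow> D) (at w)"
      by (simp add: Lim_null[symmetric])
    thus ?thesis unfolding D_def has_field_derivative_iff .
  qed
  note der = this
  have "L holomorphic_on {w. Re w > 0}"
    unfolding holomorphic_on_def field_differentiable_def
  proof
    fix w assume "w \<in> {w. Re w > 0}"
    hence "Re w > 0" by simp
    from has_field_derivative_at_within[OF der[OF this]]
    show "\<exists>f'. (L has_field_derivative f') (at w within {w. Re w > 0})" by blast
  qed
  thus ?thesis unfolding L_def g_def .
qed



lemma Greal: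
  fixes s :: complex and w :: real
  assumes s: "Re s > 0" and w: "w > 0"
  shows "integral {0<..} (\<lambda>x. of_real x powr (s-1) * exp (-(of_real w * of_real x))) = Gamma s * of_real w powr (-s)"
proof -
  define f1 where "f1 = (\<lambda>t::real. complex_of_real t powr (s - 1) / of_real (exp t))"
  define g where "g = (\<lambda>x::real. complex_of_real x powr (s-1) * exp (-(of_real w * of_real x)))"
  have f1i: "f1 absolutely_integrable_on {0<..}" unfolding f1_def by (rule absolutely_integrable_Gamma_integral'[OF s])
  have gi: "g absolutely_integrable_on {0<..}" unfolding g_def using cint[OF s, of "of_real w"] w by simp
  have "Gamma s = integral {0<..} f1"
    using Gamma_integral_complex'[OF s] unfolding f1_def by (simp add: integral_unique)
  also have "\<dots> = (LINT x:{0<..}|lebesgue. f1 x)"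
    by (rule set_lebesgue_integral_eq_integral(2)[OF f1i, symmetric])
  also have "\<dots> = (\<integral>x. indicator {0<..} x *\<^sub>R f1 x \<partial>lebesgue)"
    by (simp add: set_lebesgue_integral_def)
  also have "\<dots> = \<bar>w\<bar> *\<^sub>R (\<integral>x. indicator {0<..} (0 + w * x) *\<^sub>R f1 (0 + w * x) \<partial>lebesgue)"
    using w by (intro lebesgue_integral_real_affine) auto
  also have "(\<lambda>x. indicator {0<..} (0 + w * x) *\<^sub>R f1 (0 + w * x)) = (\<lambda>x. of_real w powr (s - 1) * (indicator {0<..} x *\<^sub>R g x))"
  proof
    fix x :: real
    show "indicator {0<..} (0 + w * x) *\<^sub>R f1 (0 + w * x) = of_real w powr (s - 1) * (indicator {0<..} x *\<^sub>R g x)"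
    proof (cases "x > 0")
      case True
      have "complex_of_real (w * x) powr (s - 1) = of_real w powr (s - 1) * of_real x powr (s - 1)"
        using w True by (simp add: powr_times_real)
      moreover have "inverse (complex_of_real (exp (w * x))) = exp (-(of_real w * of_real x))"
      proof -
        have "complex_of_real (exp (w * x)) = exp (of_real w * of_real x)" by (metis exp_of_real of_real_mult)
        thus ?thesis by (simp add: exp_minus)
      qed
      ultimately show ?thesis using True w
        by (simp add: f1_def g_def indicator_def divide_inverse mult_ac zero_less_mult_iff)
    next
      case False
      thus ?thesis using w by (simp add: indicator_def zero_less_mult_iff)
    qed
  qed
  also have "(\<integral>x. of_real w powr (s - 1) * (indicator {0<..} x *\<^sub>R g x) \<partial>lebesgue)
      = of_real w powr (s - 1) * (\<integral>x. indicator {0<..} x *\<^sub>R g x \<partial>lebesgue)"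
    by (rule integral_mult_right_zero)
  also have "(\<integral>x. indicator {0<..} x *\<^sub>R g x \<partial>lebesgue) = integral {0<..} g"
    using set_lebesgue_integral_eq_integral(2)[OF gi] by (simp add: set_lebesgue_integral_def)
  finally have "Gamma s = of_real w * of_real w powr (s - 1) * integral {0<..} g"
    using w by (simp add: scaleR_conv_of_real mult_ac)
  also have "of_real w * of_real w powr (s - 1) = (of_real w :: complex) powr s"
    using cpowr_m1[OF w, of s] by simp
  finally have "integral {0<..} g = Gamma s / of_real w powr s"
    using w by (simp add: field_simps)
  thus ?thesis unfolding g_def by (simp add: powr_minus divide_inverse)
qed

lemma Gcomplex:
  fixes s w :: complex
  assumes s: "Re s > 0" and w: "Re w > 0"
  shows "integral {0<..} (\<lambda>x. of_real x powr (s-1) * exp (-(w * of_real x))) = Gamma s * w powr (-s)"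
proof -
  define S where "S = {w::complex. Re w > 0}"
  define f where "f = (\<lambda>w. integral {0<..} (\<lambda>x. of_real x powr (s-1) * exp (-(w * of_real x))) - Gamma s * w powr (-s))"
  have "f holomorphic_on S"
  proof -
    have "(\<lambda>w. w powr (-s)) holomorphic_on S"
      by (intro holomorphic_intros) (auto simp: S_def nonpos_Reals_def)
    hence h1: "(\<lambda>w. Gamma s * w powr (-s)) holomorphic_on S" by (rule holomorphic_on_mult[OF holomorphic_on_const])
    show ?thesis using holomorphic_on_diff[OF Lhol[OF s] h1[unfolded S_def]] unfolding f_def S_def by simp
  qed
  moreover have "open S" unfolding S_def by (rule open_halfspace_Re_gt)
  moreover have "connected S" unfolding S_def by (intro convex_connected convex_halfspace_Re_gt)
  moreover have "of_real ` {0<..} \<subseteq> S" by (auto simp: S_def)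
  moreover have "1 \<in> S" by (simp add: S_def)
  moreover have "1 islimpt (of_real ` {0<..} :: complex set)"
  proof (rule islimpt_approachable[THEN iffD2], intro allI impI)
    fix e :: real assume e: "e > 0"
    show "\<exists>x'\<in>(of_real ` {0<..} :: complex set). x' \<noteq> 1 \<and> dist x' 1 < e"
    proof -
      have 1: "complex_of_real (1 + e/2) \<in> of_real ` {0<..}" using e by (intro imageI) auto
      have 2: "complex_of_real (1 + e/2) \<noteq> 1" using e by (metis add_cancel_left_right divide_eq_0_iff of_real_eq_1_iff zero_neq_numeral less_irrefl)
      have "dist (complex_of_real (1 + e/2)) 1 = dist (1 + e/2) (1::real)" by (metis dist_of_real of_real_1)
      hence 3: "dist (complex_of_real (1 + e/2)) 1 < e" using e by (simp add: dist_real_def)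
      from 1 2 3 show ?thesis by blast
    qed
  qed
  moreover have "\<And>z. z \<in> of_real ` {0<..} \<Longrightarrow> f z = 0"
    using Greal[OF s] by (auto simp: f_def)
  moreover have "w \<in> S" using w by (simp add: S_def)
  ultimately have "f w = 0" by (rule analytic_continuation)
  thus ?thesis by (simp add: f_def)
qed



lemma int_sqrt:
  fixes p a :: real
  assumes p: "p > -1" and a: "a > 0"
  shows "(\<lambda>x. x powr p * exp (- a * sqrt x)) integrable_on {0<..}"
proof -
  obtain k :: nat where k: "real k > p + 1" using reals_Archimedean2 by blast
  have cont: "continuous_on S (\<lambda>x. x powr p * exp (- a * sqrt x))" if "S \<subseteq> {0<..}" for S
    using that by (intro continuous_intros) auto
  have A: "(\<lambda>x. x powr p * exp (- a * sqrt x)) integrable_on {0<..1}"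
  proof -
    have "(\<lambda>x. x powr p * exp (- a * sqrt x)) absolutely_integrable_on {0<..1}"
    proof (rule measurable_bounded_by_integrable_imp_absolutely_integrable)
      show "(\<lambda>x. x powr p * exp (- a * sqrt x)) \<in> borel_measurable (lebesgue_on {0<..1})"
        by (intro continuous_imp_measurable_on_sets_lebesgue cont) auto
      show "(\<lambda>x. x powr p) integrable_on {0<..1}" using p by (intro integrable_on_powr_from_0') auto
      fix x :: real assume x: "x \<in> {0<..1}"
      thus "norm (x powr p * exp (- a * sqrt x)) \<le> x powr p"
        using a by (auto simp: abs_mult intro!: mult_left_le)
    qed auto
    thus ?thesis using set_lebesgue_integral_eq_integral(1) by blast
  qed
  define C where "C = fact (2*k) / a ^ (2*k)"
  have B: "(\<lambda>x. x powr p * exp (- a * sqrt x)) integrable_on {1..}"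
  proof -
    have "(\<lambda>x. x powr p * exp (- a * sqrt x)) absolutely_integrable_on {1..}"
    proof (rule measurable_bounded_by_integrable_imp_absolutely_integrable)
      show "(\<lambda>x. x powr p * exp (- a * sqrt x)) \<in> borel_measurable (lebesgue_on {1..})"
        by (intro continuous_imp_measurable_on_sets_lebesgue cont) auto
      show "(\<lambda>x. C * x powr (p - real k)) integrable_on {1..}"
        using has_integral_powr_to_inf[of "p - real k" 1] k
        by (intro integrable_on_mult_right) (auto simp: integrable_on_def)
      fix x :: real assume x: "x \<in> {1..}"
      have x0: "x > 0" using x by auto
      have "(a * sqrt x) ^ (2*k) / fact (2*k) \<le> exp (a * sqrt x)"
        using a x by (intro exp_ge_pow) auto
      moreover have "(a * sqrt x) ^ (2*k) = a ^ (2*k) * x ^ k"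
        using x0 by (simp add: power_mult_distrib power_mult)
      ultimately have e: "a ^ (2*k) * x ^ k / fact (2*k) \<le> exp (a * sqrt x)" by simp
      have "exp (- a * sqrt x) = inverse (exp (a * sqrt x))" by (simp add: exp_minus)
      also have "\<dots> \<le> inverse (a ^ (2*k) * x ^ k / fact (2*k))"
        using e a x0 by (intro le_imp_inverse_le) auto
      also have "\<dots> = C / x ^ k" by (simp add: C_def field_simps)
      finally have "x powr p * exp (- a * sqrt x) \<le> x powr p * (C / x ^ k)"
        by (intro mult_left_mono) auto
      also have "x powr p * (C / x ^ k) = C * x powr (p - real k)"
        using x0 by (simp add: powr_diff powr_realpow)
      finally show "norm (x powr p * exp (- a * sqrt x)) \<le> C * x powr (p - real k)"
        by simp
    qed auto
    thus ?thesis using set_lebesgue_integral_eq_integral(1) by blast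
  qed
  show ?thesis
    by (rule integrable_Un'[OF A B]) (auto intro: negligible_subset[of "{1}"])
qed

lemma term_int:
  fixes s :: complex and e y :: real
  assumes s: "Re s > 0" and e: "e > 0"
  shows "((\<lambda>x. of_real x powr (s-1) * of_real (exp (-(e*x))) * of_real (cos (x*y))) has_integral
          Gamma s * ((of_real e - \<i> * of_real y) powr (-s) + (of_real e + \<i> * of_real y) powr (-s)) / 2) {0<..}"
proof -
  define w1 where "w1 = of_real e - \<i> * of_real y"
  define w2 where "w2 = of_real e + \<i> * of_real y"
  have hi: "((\<lambda>x. of_real x powr (s-1) * exp (-(w * of_real x))) has_integral Gamma s * w powr (-s)) {0<..}"
    if "Re w > 0" for w
  proof -
    have "(\<lambda>x. of_real x powr (s-1) * exp (-(w * of_real x))) integrable_on {0<..}"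
      using cint[OF s that] set_lebesgue_integral_eq_integral(1) by blast
    from integrable_integral[OF this] show ?thesis using Gcomplex[OF s that] by simp
  qed
  have "((\<lambda>x. (of_real x powr (s-1) * exp (-(w1 * of_real x)) + of_real x powr (s-1) * exp (-(w2 * of_real x))) / 2)
        has_integral (Gamma s * w1 powr (-s) + Gamma s * w2 powr (-s)) / 2) {0<..}"
    using e by (intro has_integral_divide has_integral_add hi) (auto simp: w1_def w2_def)
  moreover have "(Gamma s * w1 powr (-s) + Gamma s * w2 powr (-s)) / 2 =
     Gamma s * ((of_real e - \<i> * of_real y) powr (-s) + (of_real e + \<i> * of_real y) powr (-s)) / 2"
    by (simp add: w1_def w2_def algebra_simps)
  ultimately have H: "((\<lambda>x. (of_real x powr (s-1) * exp (-(w1 * of_real x)) + of_real x powr (s-1) * exp (-(w2 * of_real x))) / 2)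
        has_integral Gamma s * ((of_real e - \<i> * of_real y) powr (-s) + (of_real e + \<i> * of_real y) powr (-s)) / 2) {0<..}"
    by simp
  show ?thesis using H
  proof (rule has_integral_eq[rotated])
    fix x :: real assume "x \<in> {0<..}"
    have 1: "-(w1 * of_real x) = of_real (-(e*x)) + \<i> * of_real (x*y)" by (simp add: w1_def algebra_simps)
    have 2: "-(w2 * of_real x) = of_real (-(e*x)) + -(\<i> * of_real (x*y))" by (simp add: w2_def algebra_simps)
    have c: "complex_of_real (cos (x*y)) = (exp (\<i> * of_real (x*y)) + exp (-(\<i> * of_real (x*y)))) / 2"
      by (simp add: cos_of_real[symmetric] cos_exp_eq del: cos_of_real)
    have ee: "complex_of_real (exp (-(e*x))) = exp (of_real (-(e*x)))" by (rule exp_of_real[symmetric])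
    show "(of_real x powr (s-1) * exp (-(w1 * of_real x)) + of_real x powr (s-1) * exp (-(w2 * of_real x))) / 2
          = of_real x powr (s-1) * of_real (exp (-(e*x))) * of_real (cos (x*y))"
      unfolding 1 2 c ee exp_add by (simp add: algebra_simps)
  qed
qed

lemma sqrt_pow_powr: "x > 0 \<Longrightarrow> sqrt x ^ l = x powr (real l / 2)"
proof -
  assume x: "x > 0"
  have "sqrt x ^ l = (x powr (1/2)) ^ l" using x by (simp add: powr_half_sqrt)
  also have "\<dots> = (x powr (1/2)) powr (real l)" using x by (simp add: powr_realpow)
  also have "\<dots> = x powr (real l / 2)" by (simp add: powr_powr)
  finally show ?thesis .
qed

lemma powr_half:
  assumes x: "x > 0"
  shows "(of_real x :: complex) powr (v + of_real (real l / 2) - 1) = of_real x powr (v - 1) * of_real (sqrt x ^ l)"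
proof -
  have "(of_real x :: complex) powr (v + of_real (real l / 2) - 1) = of_real x powr ((v - 1) + of_real (real l / 2))"
    by (simp add: algebra_simps)
  also have "\<dots> = of_real x powr (v - 1) * of_real x powr (of_real (real l / 2))" by (rule powr_add)
  also have "(of_real x :: complex) powr (of_real (real l / 2)) = of_real (x powr (real l / 2))"
    using x by (intro powr_of_real) auto
  also have "x powr (real l / 2) = sqrt x ^ l" using x by (simp add: sqrt_pow_powr)
  finally show ?thesis .
qed

lemma partial_exp_le: "0 \<le> u \<Longrightarrow> (\<Sum>l<n. u ^ l / fact l) \<le> exp (u::real)"
proof -
  assume u: "0 \<le> u"
  have s: "(\<lambda>k. u^k /\<^sub>R fact k) sums exp u" by (rule exp_converges)
  have "(\<Sum>l<n. u ^ l / fact l) = (\<Sum>l<n. u ^ l /\<^sub>R fact l)" by (simp add: divide_inverse_commute)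
  also have "\<dots> \<le> (\<Sum>k. u^k /\<^sub>R fact k)"
    using s u by (intro sum_le_suminf) (auto simp: sums_iff)
  also have "\<dots> = exp u" using s by (simp add: sums_iff)
  finally show ?thesis .
qed

lemma amgm_exp: 
  fixes a e x :: real assumes "e > 0" "x \<ge> 0"
  shows "exp (-(e*x)) * exp (a * sqrt x) \<le> exp (a^2 / (2*e)) * exp (-(e/2 * x))"
proof -
  have "0 \<le> (a - e * sqrt x)^2" by simp
  also have "(a - e * sqrt x)^2 = a^2 - 2 * a * e * sqrt x + e^2 * x"
    using assms by (simp add: power2_eq_square algebra_simps)
  finally have "2 * e * (a * sqrt x) \<le> a^2 + e^2 * x" by (simp add: algebra_simps)
  hence "a * sqrt x \<le> a^2 / (2*e) + e/2 * x" using assms by (simp add: field_simps power2_eq_square)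
  hence "-(e*x) + a * sqrt x \<le> a^2 / (2*e) + -(e/2 * x)" by simp
  thus ?thesis unfolding exp_add[symmetric] by simp
qed

lemma sum_eps:
  fixes v :: complex and a e y :: real
  assumes v: "Re v > 0" and a: "a > 0" and e: "e > 0"
  defines "tm \<equiv> (\<lambda>l. of_real ((-a)^l / fact l) * (Gamma (v + of_real (real l / 2)) *
       ((of_real e - \<i> * of_real y) powr (-(v + of_real (real l / 2))) + (of_real e + \<i> * of_real y) powr (-(v + of_real (real l / 2)))) / 2))"
  shows "tm sums integral {0<..} (\<lambda>x. of_real x powr (v-1) * of_real (exp (- a * sqrt x)) * of_real (exp (-(e*x))) * of_real (cos (x*y)))"
proof -
  define K where "K = (\<lambda>x::real. of_real x powr (v-1) * of_real (exp (-(e*x))) * of_real (cos (x*y)) :: complex)"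
  define f where "f = (\<lambda>l x. of_real ((-a)^l / fact l) * (of_real x powr (v + of_real (real l / 2) - 1) * of_real (exp (-(e*x))) * of_real (cos (x*y))) :: complex)"
  define G where "G = (\<lambda>x. of_real x powr (v-1) * of_real (exp (- a * sqrt x)) * of_real (exp (-(e*x))) * of_real (cos (x*y)) :: complex)"
  define h where "h = (\<lambda>x. exp (a^2 / (2*e)) * (x powr (Re v - 1) * exp (-(e/2 * x))))"
  have fi: "(f l has_integral tm l) {0<..}" for l
    unfolding f_def tm_def using v e
    by (intro has_integral_mult_right term_int) auto
  have fK: "f l x = K x * of_real ((- a * sqrt x) ^ l / fact l)" if x: "x > 0" for l x
  proof -
    have r: "(- a * sqrt x) ^ l / fact l = (-a)^l / fact l * sqrt x ^ l"
      by (simp add: power_mult_distrib[symmetric] del: power_mult_distrib)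
    show ?thesis unfolding f_def K_def powr_half[OF x] r of_real_mult by (simp add: mult_ac)
  qed
  have hi: "h integrable_on {0<..}"
    unfolding h_def using v e by (intro integrable_on_mult_right int_powr_exp) auto
  have Pi: "(\<lambda>x. \<Sum>l<n. f l x) integrable_on {0<..}" for n
    using fi by (intro integrable_sum) (auto simp: integrable_on_def)
  have Pint: "integral {0<..} (\<lambda>x. \<Sum>l<n. f l x) = (\<Sum>l<n. tm l)" for n
  proof -
    have "integral {0<..} (\<lambda>x. \<Sum>l<n. f l x) = (\<Sum>l<n. integral {0<..} (f l))"
      using fi by (intro integral_sum) (auto simp: integrable_on_def)
    also have "\<dots> = (\<Sum>l<n. tm l)" using fi by (intro sum.cong refl integral_unique)
    finally show ?thesis .
  qed
  have normK: "norm (K x) \<le> x powr (Re v - 1) * exp (-(e*x))" if x: "x > 0" for x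
    unfolding K_def using x by (simp add: norm_mult norm_ofreal_powr abs_cos_le_one mult_left_le)
  have le: "norm (\<Sum>l<n. f l x) \<le> h x" if x: "x \<in> {0<..}" for n x
  proof -
    have x0: "x > 0" using x by simp
    have "norm (\<Sum>l<n. f l x) \<le> (\<Sum>l<n. norm (f l x))" by (rule norm_sum)
    also have "\<dots> = norm (K x) * (\<Sum>l<n. (a * sqrt x) ^ l / fact l)"
      using x0 a by (simp add: fK norm_mult sum_distrib_left norm_divide norm_power abs_mult)
    also have "\<dots> \<le> (x powr (Re v - 1) * exp (-(e*x))) * exp (a * sqrt x)"
      using x0 a by (intro mult_mono normK partial_exp_le sum_nonneg) auto
    also have "\<dots> = x powr (Re v - 1) * (exp (-(e*x)) * exp (a * sqrt x))" by (simp add: mult_ac)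
    also have "\<dots> \<le> x powr (Re v - 1) * (exp (a^2 / (2*e)) * exp (-(e/2 * x)))"
      using x0 e by (intro mult_left_mono amgm_exp) auto
    also have "\<dots> = h x" by (simp add: h_def mult_ac)
    finally show ?thesis .
  qed
  have conv: "(\<lambda>n. \<Sum>l<n. f l x) \<longlonglongrightarrow> G x" if x: "x \<in> {0<..}" for x
  proof -
    have x0: "x > 0" using x by simp
    have "(\<lambda>l. (- a * sqrt x) ^ l /\<^sub>R fact l) sums exp (- a * sqrt x)" by (rule exp_converges)
    hence "(\<lambda>l. (- a * sqrt x) ^ l / fact l) sums exp (- a * sqrt x)" by (simp add: divide_inverse_commute)
    hence "(\<lambda>l. of_real ((- a * sqrt x) ^ l / fact l) :: complex) sums of_real (exp (- a * sqrt x))"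
      by (subst sums_of_real_iff)
    hence "(\<lambda>l. K x * of_real ((- a * sqrt x) ^ l / fact l)) sums (K x * of_real (exp (- a * sqrt x)))"
      by (rule sums_mult)
    hence "(\<lambda>l. f l x) sums G x" using x0 by (simp add: fK G_def K_def mult_ac)
    thus ?thesis by (simp add: sums_def)
  qed
  have "(\<lambda>n. integral {0<..} (\<lambda>x. \<Sum>l<n. f l x)) \<longlonglongrightarrow> integral {0<..} G"
    by (rule dominated_convergence(2)[OF Pi hi le conv])
  hence "(\<lambda>n. \<Sum>l<n. tm l) \<longlonglongrightarrow> integral {0<..} G" by (simp add: Pint)
  thus ?thesis unfolding sums_def G_def .
qed



lemma lim_lhs:
  fixes v :: complex and a y :: real
  assumes v: "Re v > 0" and a: "a > 0"
  shows "(\<lambda>n. integral {0<..} (\<lambda>x. of_real x powr (v-1) * of_real (exp (- a * sqrt x)) * of_real (exp (-(inverse (real (Suc n)) * x))) * of_real (cos (x*y))))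
          \<longlonglongrightarrow> Icos v a y"
proof -
  define h where "h = (\<lambda>x::real. x powr (Re v - 1) * exp (- a * sqrt x))"
  define f where "f = (\<lambda>n x. of_real x powr (v-1) * of_real (exp (- a * sqrt x)) * of_real (exp (-(inverse (real (Suc n)) * x))) * of_real (cos (x*y)) :: complex)"
  have hi: "h integrable_on {0<..}" unfolding h_def using v a by (intro int_sqrt) auto
  have le: "norm (f n x) \<le> h x" if x: "x \<in> {0<..}" for n x
  proof -
    have x0: "x > 0" using x by simp
    have "norm (f n x) = x powr (Re v - 1) * exp (- a * sqrt x) * (exp (-(inverse (real (Suc n)) * x)) * \<bar>cos (x*y)\<bar>)"
      unfolding f_def using x0 by (simp add: norm_mult norm_ofreal_powr)
    also have "\<dots> \<le> x powr (Re v - 1) * exp (- a * sqrt x) * 1"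
      using x0 by (intro mult_left_mono mult_le_one abs_cos_le_one) auto
    finally show ?thesis by (simp add: h_def)
  qed
  have fi: "f n integrable_on {0<..}" for n
  proof -
    have "f n absolutely_integrable_on {0<..}"
    proof (rule measurable_bounded_by_integrable_imp_absolutely_integrable[OF _ _ hi le])
      show "f n \<in> borel_measurable (lebesgue_on {0<..})"
        unfolding f_def by (intro continuous_imp_measurable_on_sets_lebesgue continuous_intros) auto
    qed auto
    thus ?thesis using set_lebesgue_integral_eq_integral(1) by blast
  qed
  have conv: "(\<lambda>n. f n x) \<longlonglongrightarrow> of_real x powr (v - 1) * of_real (exp (- a * sqrt x)) * of_real (cos (x * y))" for x
  proof -
    have "(\<lambda>n. f n x) \<longlonglongrightarrow> of_real x powr (v-1) * of_real (exp (- a * sqrt x)) * of_real (exp (-(0 * x))) * of_real (cos (x*y))"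
      unfolding f_def by (intro tendsto_intros LIMSEQ_inverse_real_of_nat)
    thus ?thesis by simp
  qed
  have "(\<lambda>n. integral {0<..} (f n)) \<longlonglongrightarrow> integral {0<..} (\<lambda>x. of_real x powr (v - 1) * of_real (exp (- a * sqrt x)) * of_real (cos (x * y)))"
    by (rule dominated_convergence(2)[OF fi hi le conv])
  thus ?thesis unfolding f_def Icos_def .
qed

lemma Gamma_real_part:
  fixes s :: complex and y :: real
  assumes s: "Re s > 0" and y: "y > 0"
  shows "norm (Gamma s) * y powr (- Re s) \<le> integral {0<..} (\<lambda>x. x powr (Re s - 1) * exp (-(y * x)))"
proof -
  have "norm (Gamma s) * y powr (- Re s) = norm (Gamma s * of_real y powr (-s))"
    using y by (simp add: norm_mult norm_ofreal_powr)
  also have "Gamma s * of_real y powr (-s) = integral {0<..} (\<lambda>x. of_real x powr (s-1) * exp (-(of_real y * of_real x)))"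
    using Greal[OF s y] by simp
  also have "norm \<dots> \<le> integral {0<..} (\<lambda>x. x powr (Re s - 1) * exp (-(y * x)))"
  proof (rule integral_norm_bound_integral)
    show "(\<lambda>x. of_real x powr (s-1) * exp (-(of_real y * of_real x))) integrable_on {0<..}"
      using cint[OF s, of "of_real y"] y set_lebesgue_integral_eq_integral(1) by force
    show "(\<lambda>x. x powr (Re s - 1) * exp (-(y * x))) integrable_on {0<..}"
      using s y by (intro int_powr_exp) auto
    fix x :: real assume "x \<in> {0<..}"
    thus "norm (of_real x powr (s-1) * exp (-(of_real y * of_real x))) \<le> x powr (Re s - 1) * exp (-(y * x))"
      by (simp add: norm_mult norm_ofreal_powr)
  qed
  finally show ?thesis .
qed

lemma summable_M:
  fixes v :: complex and a y :: real
  assumes v: "Re v > 0" and a: "a > 0" and y: "y > 0"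
  shows "summable (\<lambda>l. a ^ l / fact l * (norm (Gamma (v + of_real (real l / 2))) * y powr (- Re (v + of_real (real l / 2)))))"
proof -
  define I where "I = (\<lambda>l. integral {0<..} (\<lambda>x. x powr (Re v + real l / 2 - 1) * exp (-(y * x))))"
  have Ii: "(\<lambda>x. x powr (Re v + real l / 2 - 1) * exp (-(y * x))) integrable_on {0<..}" for l
    using v y by (intro int_powr_exp) auto
  have bnd: "a ^ l / fact l * (norm (Gamma (v + of_real (real l / 2))) * y powr (- Re (v + of_real (real l / 2)))) \<le> a ^ l / fact l * I l" for l
    unfolding I_def using Gamma_real_part[of "v + of_real (real l / 2)" y] v y a
    by (intro mult_left_mono) (auto simp: algebra_simps)
  define h where "h = (\<lambda>x. exp (a^2 / (2*y)) * (x powr (Re v - 1) * exp (-(y/2 * x))))"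
  have hi: "h integrable_on {0<..}" unfolding h_def using v y by (intro integrable_on_mult_right int_powr_exp) auto
  have "summable (\<lambda>l. a ^ l / fact l * I l)"
  proof (rule summableI_nonneg_bounded)
    fix l :: nat
    show "0 \<le> a ^ l / fact l * I l" unfolding I_def using a
      by (intro mult_nonneg_nonneg integral_nonneg Ii) auto
  next
    fix n :: nat
    have "(\<Sum>l<n. a ^ l / fact l * I l) = integral {0<..} (\<lambda>x. \<Sum>l<n. a ^ l / fact l * (x powr (Re v + real l / 2 - 1) * exp (-(y * x))))"
      unfolding I_def by (subst integral_sum) (auto intro!: integrable_on_mult_right Ii simp: integral_mult_right)
    also have "\<dots> \<le> integral {0<..} h"
    proof (rule integral_le)
      show "(\<lambda>x. \<Sum>l<n. a ^ l / fact l * (x powr (Re v + real l / 2 - 1) * exp (-(y * x)))) integrable_on {0<..}"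
        by (intro integrable_sum integrable_on_mult_right Ii) auto
      show "h integrable_on {0<..}" by (fact hi)
      fix x :: real assume "x \<in> {0<..}"
      hence x0: "x > 0" by simp
      have "(\<Sum>l<n. a ^ l / fact l * (x powr (Re v + real l / 2 - 1) * exp (-(y * x))))
          = x powr (Re v - 1) * exp (-(y * x)) * (\<Sum>l<n. (a * sqrt x) ^ l / fact l)"
        unfolding sum_distrib_left
      proof (intro sum.cong refl)
        fix l assume "l \<in> {..<n}"
        have "x powr (Re v + real l / 2 - 1) = x powr (Re v - 1) * x powr (real l / 2)"
          using x0 by (simp add: powr_add[symmetric] algebra_simps)
        also have "x powr (real l / 2) = sqrt x ^ l" using x0 by (simp add: sqrt_pow_powr)
        finally show "a ^ l / fact l * (x powr (Re v + real l / 2 - 1) * exp (-(y * x))) =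
             x powr (Re v - 1) * exp (-(y * x)) * ((a * sqrt x) ^ l / fact l)"
          by (simp add: power_mult_distrib)
      qed
      also have "\<dots> \<le> x powr (Re v - 1) * exp (-(y * x)) * exp (a * sqrt x)"
        using x0 a by (intro mult_left_mono partial_exp_le) auto
      also have "\<dots> = x powr (Re v - 1) * (exp (-(y * x)) * exp (a * sqrt x))" by (simp add: mult_ac)
      also have "\<dots> \<le> x powr (Re v - 1) * (exp (a^2 / (2*y)) * exp (-(y/2 * x)))"
        using x0 y by (intro mult_left_mono amgm_exp) auto
      also have "\<dots> = h x" by (simp add: h_def mult_ac)
      finally show "(\<Sum>l<n. a ^ l / fact l * (x powr (Re v + real l / 2 - 1) * exp (-(y * x)))) \<le> h x" .
    qed
    finally show "(\<Sum>l<n. a ^ l / fact l * I l) \<le> integral {0<..} h" .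
  qed
  thus ?thesis
    by (rule summable_comparison_test'[where N=0]) (use bnd a in \<open>auto simp: abs_mult intro!: mult_nonneg_nonneg\<close>)
qed



lemma powr_bound:
  fixes s :: complex and e y :: real
  assumes s: "Re s \<ge> 0" and e: "e \<ge> 0" and y: "y > 0" and z: "z = of_real e - \<i> * of_real y \<or> z = of_real e + \<i> * of_real y"
  shows "norm (z powr (-s)) \<le> y powr (- Re s) * exp (\<bar>Im s\<bar> * pi)"
proof -
  have nz: "y \<le> norm z"
  proof -
    have "\<bar>Im z\<bar> = y" using z y by auto
    thus ?thesis using abs_Im_le_cmod[of z] by simp
  qed
  have "norm (z powr (-s)) = norm z powr (- Re s) * exp (Im s * Arg z)"
    by (simp add: norm_powr_complex)
  also have "\<dots> \<le> y powr (- Re s) * exp (\<bar>Im s\<bar> * pi)"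
  proof (intro mult_mono)
    show "norm z powr (- Re s) \<le> y powr (- Re s)" using s y nz by (intro powr_mono2') auto
    have "Im s * Arg z \<le> \<bar>Im s\<bar> * \<bar>Arg z\<bar>" by (metis abs_ge_self abs_mult)
    also have "\<dots> \<le> \<bar>Im s\<bar> * pi" using Arg_bounded[of z] by (intro mult_left_mono) auto
    finally show "exp (Im s * Arg z) \<le> exp (\<bar>Im s\<bar> * pi)" by simp
  qed auto
  finally show ?thesis .
qed

lemma value_at_0:
  fixes s :: complex and y :: real
  assumes y: "y > 0"
  shows "(of_real 0 - \<i> * of_real y) powr (-s) + (of_real 0 + \<i> * of_real y) powr (-s) = 2 * of_real y powr (-s) * cos (s * of_real pi / 2)"
proof -
  define L where "L = complex_of_real (ln y)"
  have L: "Ln (of_real y) = L" using y by (simp add: L_def Ln_of_real)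
  have y0: "(of_real y :: complex) \<noteq> 0" using y by simp
  have 1: "Ln (\<i> * of_real y) = L + \<i> * of_real pi / 2"
    using Ln_times_ii[OF y0] y L by simp
  have 2: "Ln (-(\<i> * of_real y)) = L - \<i> * of_real pi / 2"
  proof -
    have "\<i> * complex_of_real y \<noteq> 0" using y by simp
    from Ln_minus[OF this] have "Ln (-(\<i> * of_real y)) = Ln (\<i> * of_real y) - \<i> * pi" using y by simp
    thus ?thesis using 1 by (simp add: algebra_simps)
  qed
  define A where "A = -s * L"
  define B where "B = \<i> * (s * of_real pi / 2)"
  have e1: "(of_real 0 - \<i> * of_real y) powr (-s) = exp A * exp B"
  proof -
    have "(of_real 0 - \<i> * of_real y) powr (-s) = exp (-s * (L - \<i> * of_real pi / 2))"
      using y by (simp add: powr_def 2)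
    also have "-s * (L - \<i> * of_real pi / 2) = A + B" by (simp add: A_def B_def algebra_simps)
    finally show ?thesis by (simp add: exp_add)
  qed
  have e2: "(of_real 0 + \<i> * of_real y) powr (-s) = exp A * exp (-B)"
  proof -
    have "(of_real 0 + \<i> * of_real y) powr (-s) = exp (-s * (L + \<i> * of_real pi / 2))"
      using y by (simp add: powr_def 1)
    also have "-s * (L + \<i> * of_real pi / 2) = A + -B" by (simp add: A_def B_def algebra_simps)
    finally show ?thesis by (simp only: exp_add)
  qed
  have e3: "(of_real y :: complex) powr (-s) = exp A"
    using y by (simp add: powr_def L A_def)
  have c: "cos (s * of_real pi / 2) = (exp B + exp (-B)) / 2"
    unfolding B_def by (rule cos_exp_eq)
  show ?thesis unfolding e1 e2 e3 c by (simp add: algebra_simps)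
qed

lemma rearr: "(c::complex) / f * (G * (Y / P * K)) = Y * (c * G / (P * f) * K)"
  by (simp add: divide_inverse mult_ac)

lemma mainM:
  fixes v :: complex and a y :: real
  assumes v: "Re v > 0" and a: "a > 0" and y: "y > 0"
  defines "T \<equiv> (\<lambda>l. (-1) ^ l * of_real (a ^ l) * Gamma (v + of_real (real l / 2))
               / (of_real (y powr (real l / 2)) * fact l)
               * cos (v * of_real pi / 2 + of_real (real l * pi / 4)))"
  shows "summable T \<and> summable (\<lambda>l. norm (T l)) \<and> Icos v a y = of_real y powr (- v) * suminf T"
proof -
  define s where "s = (\<lambda>l::nat. v + of_real (real l / 2))"
  define tm where "tm = (\<lambda>(e::real) l. of_real ((-a)^l / fact l) * (Gamma (v + of_real (real l / 2)) *
       ((of_real e - \<i> * of_real y) powr (-(v + of_real (real l / 2))) + (of_real e + \<i> * of_real y) powr (-(v + of_real (real l / 2)))) / 2))"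
  define M where "M = (\<lambda>l. a ^ l / fact l * (norm (Gamma (v + of_real (real l / 2))) * y powr (- Re (v + of_real (real l / 2)))) * exp (\<bar>Im v\<bar> * pi))"
  define J where "J = (\<lambda>n. integral {0<..} (\<lambda>x. of_real x powr (v-1) * of_real (exp (- a * sqrt x)) * of_real (exp (-(inverse (real (Suc n)) * x))) * of_real (cos (x*y))))"
  have sums_n: "(tm (inverse (real (Suc n)))) sums J n" for n
    unfolding tm_def J_def by (rule sum_eps[OF v a]) simp
  have Msum: "summable M" unfolding M_def by (intro summable_mult2 summable_M v a y)
  have bound: "norm (tm e l) \<le> M l" if e: "e \<ge> 0" for e l
  proof -
    have Res: "Re (v + of_real (real l / 2)) \<ge> 0" using v by simp
    have Ims: "Im (v + of_real (real l / 2)) = Im v" by simp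
    have b1: "norm ((of_real e - \<i> * of_real y) powr (-(v + of_real (real l / 2)))) \<le> y powr (- Re (v + of_real (real l / 2))) * exp (\<bar>Im v\<bar> * pi)"
      using powr_bound[OF Res e y, of "of_real e - \<i> * of_real y"] Ims by simp
    have b2: "norm ((of_real e + \<i> * of_real y) powr (-(v + of_real (real l / 2)))) \<le> y powr (- Re (v + of_real (real l / 2))) * exp (\<bar>Im v\<bar> * pi)"
      using powr_bound[OF Res e y, of "of_real e + \<i> * of_real y"] Ims by simp
    define X where "X = (of_real e - \<i> * of_real y) powr (-(v + of_real (real l / 2)))"
    define Y where "Y = (of_real e + \<i> * of_real y) powr (-(v + of_real (real l / 2)))"
    define Q where "Q = y powr (- Re (v + of_real (real l / 2))) * exp (\<bar>Im v\<bar> * pi)"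
    have hP: "norm ((X + Y) / 2) \<le> Q"
    proof -
      have "norm (X + Y) \<le> Q + Q" using norm_triangle_le[OF add_mono[OF b1 b2]] by (simp add: X_def Y_def Q_def)
      thus ?thesis by (simp add: norm_divide)
    qed
    have "tm e l = of_real ((-a)^l / fact l) * (Gamma (v + of_real (real l / 2)) * ((X + Y) / 2))"
      by (simp add: tm_def X_def Y_def)
    hence "norm (tm e l) = \<bar>(-a)^l / fact l\<bar> * (norm (Gamma (v + of_real (real l / 2))) * norm ((X + Y) / 2))"
      by (simp only: norm_mult norm_of_real)
    also have "\<bar>(-a)^l / fact l\<bar> = a ^ l / fact l" using a by (simp add: power_abs)
    also have "a ^ l / fact l * (norm (Gamma (v + of_real (real l / 2))) * norm ((X + Y) / 2))
             \<le> a ^ l / fact l * (norm (Gamma (v + of_real (real l / 2))) * Q)"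
      using a hP by (intro mult_left_mono) auto
    finally have "norm (tm e l) \<le> a ^ l / fact l * (norm (Gamma (v + of_real (real l / 2))) * Q)" .
    thus ?thesis by (simp add: M_def Q_def mult_ac)
  qed
  have lim_terms: "(\<lambda>n. tm (inverse (real (Suc n))) l) \<longlonglongrightarrow> tm 0 l" for l
  proof -
    have nn: "of_real 0 - \<i> * of_real y \<notin> \<real>\<^sub>\<le>\<^sub>0" "of_real 0 + \<i> * of_real y \<notin> \<real>\<^sub>\<le>\<^sub>0"
      using y by (auto simp: nonpos_Reals_def complex_eq_iff)
    show ?thesis unfolding tm_def
      by (intro tendsto_intros LIMSEQ_inverse_real_of_nat) (use nn in auto)
  qed
  have tann: "eventually (\<lambda>n. summable (\<lambda>k. norm (tm (inverse (real (Suc n))) k))) sequentially \<and>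
           summable (\<lambda>n. norm (tm 0 n)) \<and>
           ((\<lambda>n. suminf (\<lambda>k. tm (inverse (real (Suc n))) k)) \<longlonglongrightarrow> suminf (tm 0))"
  proof (rule tannerys_theorem[OF lim_terms _ Msum])
    show "\<forall>\<^sub>F (k, n) in at_top \<times>\<^sub>F sequentially. norm (tm (inverse (real (Suc n))) k) \<le> M k"
      by (intro always_eventually) (auto intro!: bound)
  qed auto
  have "(\<lambda>n. J n) \<longlonglongrightarrow> suminf (tm 0)"
    using tann sums_n by (simp add: sums_iff)
  moreover have "(\<lambda>n. J n) \<longlonglongrightarrow> Icos v a y" unfolding J_def by (rule lim_lhs[OF v a])
  ultimately have I: "Icos v a y = suminf (tm 0)" using LIMSEQ_unique by blast
  have tm0: "tm 0 l = of_real y powr (- v) * T l" for l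
  proof -
    have "tm 0 l = of_real ((-a)^l / fact l) * (Gamma (s l) * (of_real y powr (- s l) * cos (s l * of_real pi / 2)))"
      unfolding tm_def s_def value_at_0[OF y] by simp
    also have "of_real y powr (- s l) = of_real y powr (-v) / of_real (y powr (real l / 2))"
    proof -
      have "(of_real y :: complex) powr (- s l) = of_real y powr (-v + of_real (-(real l / 2)))"
        by (simp add: s_def algebra_simps)
      also have "\<dots> = of_real y powr (-v) * of_real y powr (of_real (-(real l / 2)))" by (rule powr_add)
      also have "(of_real y :: complex) powr (of_real (-(real l / 2))) = of_real (y powr (-(real l / 2)))"
        using y by (intro powr_of_real) auto
      also have "y powr (-(real l / 2)) = inverse (y powr (real l / 2))" by (simp add: powr_minus)
      finally show ?thesis by (simp only: of_real_inverse divide_inverse)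
    qed
    also have "s l * of_real pi / 2 = v * of_real pi / 2 + of_real (real l * pi / 4)"
      by (simp add: s_def algebra_simps)
    also have "(complex_of_real ((-a)^l / fact l)) = (-1) ^ l * of_real (a ^ l) / fact l"
      unfolding power_minus[of a l] of_real_divide of_real_mult of_real_power of_real_minus of_real_1 of_real_fact ..
    finally have "tm 0 l = (-1) ^ l * of_real (a ^ l) / fact l * (Gamma (s l) * (of_real y powr (-v) / of_real (y powr (real l / 2)) * cos (v * of_real pi / 2 + of_real (real l * pi / 4))))" .
    thus ?thesis unfolding T_def s_def by (simp only: rearr)
  qed
  have ynz: "(of_real y :: complex) powr (- v) \<noteq> 0" using y by simp
  have "summable (tm 0)" using tann summable_norm_cancel by blast
  moreover have tmeq: "(\<lambda>l. of_real y powr (- v) * T l) = tm 0" by (rule ext) (simp add: tm0)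
  ultimately have "summable (\<lambda>l. of_real y powr (- v) * T l)" by simp
  hence sT: "summable T" using ynz by (simp add: summable_cmult_iff)
  have "Icos v a y = (\<Sum>l. of_real y powr (- v) * T l)" using I by (simp only: tmeq)
  also have "\<dots> = of_real y powr (- v) * suminf T" using sT by (rule suminf_mult)
  finally have IC: "Icos v a y = of_real y powr (- v) * suminf T" .
  have "summable (\<lambda>l. norm (tm 0 l) / norm ((of_real y :: complex) powr (- v)))"
    using tann by (intro summable_divide) auto
  moreover have "(\<lambda>l. norm (tm 0 l) / norm ((of_real y :: complex) powr (- v))) = (\<lambda>l. norm (T l))"
    using ynz by (intro ext) (simp add: tm0 norm_mult)
  ultimately have "summable (\<lambda>l. norm (T l))" by simp
  thus ?thesis using sT IC by simp
qed



lemma poch_dbl: "pochhammer (u::complex) (2*n) = 4^n * pochhammer (u/2) n * pochhammer (u/2 + 1/2) n"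
proof -
  have "pochhammer (u::complex) (2*n) = pochhammer (2 * (u/2)) (2*n)" by simp
  also have "\<dots> = of_nat (2^(2*n)) * pochhammer (u/2) n * pochhammer (u/2 + 1/2) n" by (rule pochhammer_double)
  also have "(of_nat (2^(2*n)) :: complex) = 4^n" by (simp add: power_mult)
  finally show ?thesis .
qed

lemma poch_quad: "pochhammer (w::complex) (4*n) = 256^n * pochhammer (w/4) n * pochhammer (w/4 + 1/4) n * pochhammer (w/4 + 1/2) n * pochhammer (w/4 + 3/4) n"
proof -
  have "pochhammer w (4*n) = pochhammer w (2*(2*n))" by (simp add: mult.assoc[symmetric])
  also have "\<dots> = 4^(2*n) * pochhammer (w/2) (2*n) * pochhammer (w/2 + 1/2) (2*n)" by (rule poch_dbl)
  also have "pochhammer (w/2) (2*n) = 4^n * pochhammer (w/4) n * pochhammer (w/4 + 1/2) n"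
    using poch_dbl[of "w/2" n] by simp
  also have "pochhammer (w/2 + 1/2) (2*n) = 4^n * pochhammer (w/4 + 1/4) n * pochhammer (w/4 + 3/4) n"
  proof -
    have a1: "(w/2 + 1/2)/2 = w/4 + 1/4" by simp
    have a2: "(w/2 + 1/2)/2 + 1/2 = w/4 + 3/4" by (simp add: field_simps)
    have a3: "w/4 + 1/4 + 1/2 = w/4 + (3/4::complex)" by (simp add: field_simps)
    show ?thesis using poch_dbl[of "w/2 + 1/2" n] unfolding a1 a3 .
  qed
  also have "(4::complex)^(2*n) = 16^n" by (simp add: power_mult)
  finally show ?thesis by (simp add: power_mult_distrib[symmetric] mult_ac)
qed

lemma cos_npi: "cos (x + of_nat n * of_real pi) = (-1)^n * cos (x::complex)"
proof (induction n)
  case (Suc n)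
  have "cos (x + of_nat (Suc n) * of_real pi) = cos ((x + of_nat n * of_real pi) + of_real pi)"
    by (simp add: algebra_simps)
  also have "\<dots> = - cos (x + of_nat n * of_real pi)"
    by (simp add: cos_add cos_of_real[symmetric] sin_of_real[symmetric] del: cos_of_real sin_of_real)
  finally show ?case using Suc by simp
qed simp

lemma Gamma_add2n:
  assumes "Re s > 0"
  shows "Gamma (s + of_nat (2*n)) = Gamma s * 4^n * pochhammer (s/2) n * pochhammer (s/2 + 1/2) n"
proof -
  have ns: "s \<notin> \<int>\<^sub>\<le>\<^sub>0" using assms by (auto elim!: nonpos_Ints_cases)
  hence "Gamma s \<noteq> 0" by (simp add: Gamma_eq_zero_iff)
  hence "Gamma (s + of_nat (2*n)) = Gamma s * pochhammer s (2*n)"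
    using pochhammer_Gamma[OF ns, of "2*n"] by (simp add: field_simps)
  thus ?thesis unfolding poch_dbl by (simp add: mult_ac)
qed

lemma fact_4n: "(fact (4*n + j) :: complex) = fact j * 256^n * pochhammer ((of_nat j + 1)/4) n * pochhammer ((of_nat j + 2)/4) n * pochhammer ((of_nat j + 3)/4) n * pochhammer ((of_nat j + 4)/4) n"
proof -
  have "(fact (4*n + j) :: complex) = pochhammer 1 (j + 4*n)" by (simp add: pochhammer_fact add.commute)
  also have "\<dots> = pochhammer 1 j * pochhammer (1 + of_nat j) (4*n)" by (rule pochhammer_product')
  also have "pochhammer (1::complex) j = fact j" by (simp add: pochhammer_fact)
  also have "pochhammer (1 + of_nat j :: complex) (4*n) = 256^n * pochhammer ((of_nat j + 1)/4) n * pochhammer ((of_nat j + 2)/4) n * pochhammer ((of_nat j + 3)/4) n * pochhammer ((of_nat j + 4)/4) n"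
    using poch_quad[of "1 + of_nat j" n] by (simp add: add_divide_distrib add.commute mult_ac)
  finally show ?thesis by (simp add: mult_ac)
qed

lemma alg2:
  fixes S Aq Aj G P1 P2 Yj Yq Fj Q1 Q2 Q3 Q4 C :: complex
  shows "S * (Aq ^ n * Aj) * (G * 4 ^ n * P1 * P2) / ((Yj * Yq ^ n) * (Fj * 256 ^ n * Q1 * Q2 * Q3 * Q4)) * ((-1) ^ n * C)
   = (S * Aj * G / (Yj * Fj) * C) * (P1 * P2 / (Q1 * Q2 * Q3 * Q4) * ((-1) ^ n * Aq ^ n / (64 ^ n * Yq ^ n)))"
proof -
  have "(256::complex) ^ n = 4 ^ n * 64 ^ n" by (simp add: power_mult_distrib[symmetric])
  thus ?thesis by (simp add: divide_inverse inverse_mult_distrib mult_ac)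
qed

lemma T_sub:
  fixes v :: complex and a y :: real and j n :: nat
  assumes v: "Re v > 0" and y: "y > 0"
  defines "T \<equiv> (\<lambda>l. (-1) ^ l * of_real (a ^ l) * Gamma (v + of_real (real l / 2))
               / (of_real (y powr (real l / 2)) * fact l)
               * cos (v * of_real pi / 2 + of_real (real l * pi / 4)))"
  defines "\<sigma> \<equiv> v + of_real (real j / 2)"
  shows "T (4*n + j) = T j * (pochhammer (\<sigma>/2) n * pochhammer (\<sigma>/2 + 1/2) n /
     (pochhammer ((of_nat j + 1)/4) n * pochhammer ((of_nat j + 2)/4) n * pochhammer ((of_nat j + 3)/4) n * pochhammer ((of_nat j + 4)/4) n)
     * of_real (- (a ^ 4 / (64 * y ^ 2))) ^ n)"
proof -
  have Res: "Re \<sigma> > 0" using v by (simp add: \<sigma>_def)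
  have g: "Gamma (v + of_real (real (4*n + j) / 2)) = Gamma \<sigma> * 4^n * pochhammer (\<sigma>/2) n * pochhammer (\<sigma>/2 + 1/2) n"
  proof -
    have "v + of_real (real (4*n + j) / 2) = \<sigma> + of_nat (2*n)" by (simp add: \<sigma>_def algebra_simps)
    thus ?thesis using Gamma_add2n[OF Res, of n] by simp
  qed
  have p: "complex_of_real (y powr (real (4*n + j) / 2)) = of_real (y powr (real j / 2)) * of_real (y ^ 2) ^ n"
  proof -
    have ex: "real (4*n + j) / 2 = real j / 2 + real (2*n)" by (simp add: field_simps)
    have "y powr (real (4*n + j) / 2) = y powr (real j / 2 + real (2*n))" by (simp only: ex)
    also have "\<dots> = y powr (real j / 2) * y powr (real (2*n))" by (rule powr_add)
    also have "y powr (real (2*n)) = y ^ (2*n)" using y by (rule powr_realpow)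
    finally show ?thesis by (simp add: power_mult)
  qed
  have c: "cos (v * of_real pi / 2 + of_real (real (4*n + j) * pi / 4)) = (-1)^n * cos (v * of_real pi / 2 + of_real (real j * pi / 4))"
  proof -
    have "v * of_real pi / 2 + of_real (real (4*n + j) * pi / 4) = (v * of_real pi / 2 + of_real (real j * pi / 4)) + of_nat n * of_real pi"
      by (simp add: algebra_simps)
    thus ?thesis by (simp only: cos_npi)
  qed
  have sg: "(-1::complex) ^ (4*n + j) = (-1) ^ j" by (simp add: power_add power_mult)
  have pa: "complex_of_real (a ^ (4*n + j)) = of_real (a ^ 4) ^ n * of_real (a ^ j)"
    by (simp add: power_add power_mult)
  have z: "complex_of_real (- (a ^ 4 / (64 * y ^ 2))) ^ n = (-1) ^ n * of_real (a ^ 4) ^ n / (64 ^ n * of_real (y ^ 2) ^ n)"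
  proof -
    have "complex_of_real (- (a ^ 4 / (64 * y ^ 2))) = - (of_real (a ^ 4) / (64 * of_real (y ^ 2)))" by simp
    thus ?thesis
      by (simp only: power_minus[of "of_real (a ^ 4) / (64 * of_real (y ^ 2)) :: complex" n] power_divide power_mult_distrib times_divide_eq_right)
  qed
  show ?thesis
    unfolding T_def g p c sg pa z fact_4n[of n j] \<sigma>_def[symmetric] alg2 ..
qed

lemma suminf_cmult_any:
  fixes c :: complex
  assumes "summable (\<lambda>n. c * h n)"
  shows "suminf (\<lambda>n. c * h n) = c * suminf h"
proof (cases "c = 0")
  case False
  hence "summable h" using assms by (simp add: summable_cmult_iff)
  thus ?thesis by (rule suminf_mult)
qed simp

lemma group4:
  fixes T :: "nat \<Rightarrow> complex"
  assumes sn: "summable (\<lambda>l. norm (T l))"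
  shows "\<And>j. j < 4 \<Longrightarrow> summable (\<lambda>n. T (4*n + j))" and "suminf T = (\<Sum>j<4. \<Sum>n. T (4*n + j))"
proof -
  show sub: "summable (\<lambda>n. T (4*n + j))" if j: "j < 4" for j
  proof -
    define f where "f = (\<lambda>i. if i mod 4 = j then norm (T i) else 0)"
    have "summable f"
      by (rule summable_comparison_test'[OF sn, where N=0]) (auto simp: f_def)
    moreover have "strict_mono (\<lambda>n::nat. 4*n + j)" by (auto simp: strict_mono_def)
    moreover have "f i = 0" if "i \<notin> range (\<lambda>n::nat. 4*n + j)" for i
    proof (rule ccontr)
      assume "f i \<noteq> 0"
      hence "i mod 4 = j" by (auto simp: f_def split: if_splits)
      hence "i = 4 * (i div 4) + j" by (metis div_mult_mod_eq mult.commute)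
      thus False using that by blast
    qed
    ultimately have "summable (\<lambda>n. f (4*n + j))" using summable_mono_reindex by blast
    moreover have "f (4*n + j) = norm (T (4*n + j))" for n using j by (simp add: f_def)
    ultimately have "summable (\<lambda>n. norm (T (4*n + j)))" by simp
    thus ?thesis by (rule summable_norm_cancel)
  qed
  have "(\<lambda>n. sum T {n * 4..<n * 4 + 4}) sums suminf T"
    using summable_norm_cancel[OF sn] by (intro sums_group) (auto simp: summable_sums)
  moreover have "sum T {n * 4..<n * 4 + 4} = (\<Sum>j<4. T (4*n + j))" for n
  proof -
    have "sum T {n * 4..<n * 4 + 4} = sum T {0 + n*4..<4 + n*4}" by (simp add: add.commute)
    also have "\<dots> = (\<Sum>j=0..<4. T (j + n*4))" by (rule sum.shift_bounds_nat_ivl)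
    finally show ?thesis by (simp add: atLeast0LessThan add.commute mult.commute)
  qed
  ultimately have "(\<lambda>n. \<Sum>j<4. T (4*n + j)) sums suminf T" by simp
  moreover have "(\<lambda>n. \<Sum>j<4. T (4*n + j)) sums (\<Sum>j<4. \<Sum>n. T (4*n + j))"
    using sub by (intro sums_sum summable_sums) auto
  ultimately show "suminf T = (\<Sum>j<4. \<Sum>n. T (4*n + j))" using sums_unique2 by blast
qed

lemma hyp_j:
  fixes v :: complex and a y :: real and j :: nat and A B B1 B2 B3 :: complex and T :: "nat \<Rightarrow> complex"
  assumes v: "Re v > 0" and y: "y > 0"
  assumes T_def: "T = (\<lambda>l. (-1) ^ l * of_real (a ^ l) * Gamma (v + of_real (real l / 2))
               / (of_real (y powr (real l / 2)) * fact l)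
               * cos (v * of_real pi / 2 + of_real (real l * pi / 4)))"
  assumes sm: "summable (\<lambda>n. T (4*n + j))"
    and hA: "(v + of_real (real j / 2)) / 2 = A" and hB: "A + 1/2 = B"
    and hP: "\<And>n. pochhammer ((of_nat j + 1)/4) n * pochhammer ((of_nat j + 2)/4) n * pochhammer ((of_nat j + 3)/4) n * pochhammer ((of_nat j + 4)/4) n
               = pochhammer B1 n * pochhammer B2 n * pochhammer B3 n * fact n"
  shows "suminf (\<lambda>n. T (4*n + j)) = T j * hyp2F3 A B B1 B2 B3 (of_real (- (a ^ 4 / (64 * y ^ 2))))"
proof -
  have eq: "(\<lambda>n. T (4*n + j)) = (\<lambda>n. T j * (pochhammer A n * pochhammer B n /
           (pochhammer B1 n * pochhammer B2 n * pochhammer B3 n * fact n) * of_real (- (a ^ 4 / (64 * y ^ 2))) ^ n))"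
  proof
    fix n
    show "T (4*n + j) = T j * (pochhammer A n * pochhammer B n /
           (pochhammer B1 n * pochhammer B2 n * pochhammer B3 n * fact n) * of_real (- (a ^ 4 / (64 * y ^ 2))) ^ n)"
      unfolding T_def using T_sub[OF v y, where a=a and n=n and j=j] unfolding hA hB hP .
  qed
  show ?thesis unfolding eq hyp2F3_def
    by (rule suminf_cmult_any) (use sm eq in simp)
qed

lemma mainF:
  fixes v :: complex and a y :: real and F :: "nat \<Rightarrow> complex \<Rightarrow> complex"
  assumes v: "Re v > 0" and a: "a > 0" and y: "y > 0"
  defines "T \<equiv> (\<lambda>l. (-1) ^ l * of_real (a ^ l) * Gamma (v + of_real (real l / 2))
               / (of_real (y powr (real l / 2)) * fact l)
               * cos (v * of_real pi / 2 + of_real (real l * pi / 4)))"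
  assumes F0: "F 0 = hyp2F3 (v/2) ((v + 1)/2) (1/4) (1/2) (3/4)"
    and F1: "F 1 = hyp2F3 ((2 * v+1)/4) ((2 * v+3)/4) (1/2) (3/4) (5/4)"
    and F2: "F 2 = hyp2F3 ((v + 1)/2) ((v + 2)/2) (3/4) (5/4) (3/2)"
    and F3: "F 3 = hyp2F3 ((2 * v+3)/4) ((2 * v+5)/4) (5/4) (3/2) (7/4)"
  shows "(\<Sum>j\<le>3. (-1) ^ j * of_real (a ^ j) * Gamma (v + of_real (real j / 2))
               / (of_real (y powr (real j / 2)) * fact j)
               * cos (v * of_real pi / 2 + of_real (real j * pi / 4))
               * F j (of_real (- (a ^ 4 / (64 * y ^ 2))))) = suminf T"
proof -
  define z where "z = complex_of_real (- (a ^ 4 / (64 * y ^ 2)))"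
  have M: "summable T \<and> summable (\<lambda>l. norm (T l)) \<and> Icos v a y = of_real y powr (- v) * suminf T"
    unfolding T_def by (rule mainM[OF v a y])
  hence sn: "summable (\<lambda>l. norm (T l))" by simp
  note G = group4[OF sn]
  have Tq: "T = (\<lambda>l. (-1) ^ l * of_real (a ^ l) * Gamma (v + of_real (real l / 2))
               / (of_real (y powr (real l / 2)) * fact l)
               * cos (v * of_real pi / 2 + of_real (real l * pi / 4)))" by (simp add: T_def)
  have s0: "summable (\<lambda>n. T (4*n + 0))" using G(1)[of 0] by simp
  have s1: "summable (\<lambda>n. T (4*n + 1))" using G(1)[of 1] by simp
  have s2: "summable (\<lambda>n. T (4*n + 2))" using G(1)[of 2] by simp
  have s3: "summable (\<lambda>n. T (4*n + 3))" using G(1)[of 3] by simp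
  have h0: "suminf (\<lambda>n. T (4*n + 0)) = T 0 * F 0 z"
    unfolding F0 z_def
    by (rule hyp_j[OF v y Tq]) (simp_all add: s0[simplified] add_divide_distrib pochhammer_fact)
  have h1: "suminf (\<lambda>n. T (4*n + 1)) = T 1 * F 1 z"
    unfolding F1 z_def
    by (rule hyp_j[OF v y Tq s1]) (simp_all add: field_simps pochhammer_fact)
  have h2: "suminf (\<lambda>n. T (4*n + 2)) = T 2 * F 2 z"
    unfolding F2 z_def
    by (rule hyp_j[OF v y Tq s2]) (simp_all add: field_simps pochhammer_fact)
  have h3: "suminf (\<lambda>n. T (4*n + 3)) = T 3 * F 3 z"
    unfolding F3 z_def
    by (rule hyp_j[OF v y Tq s3]) (simp_all add: field_simps pochhammer_fact)
  have "suminf T = (\<Sum>j<4. \<Sum>n. T (4*n + j))" by (rule G(2))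
  also have "\<dots> = T 0 * F 0 z + T 1 * F 1 z + T 2 * F 2 z + T 3 * F 3 z"
    using h0 h1 h2 h3 by (simp add: numeral_eq_Suc lessThan_Suc)
  also have "\<dots> = (\<Sum>j\<le>3. T j * F j z)"
    by (simp add: numeral_eq_Suc atMost_Suc)
  finally show ?thesis by (simp add: T_def z_def)
qed



lemma Icos_bound:
  fixes v :: complex and a a0 y :: real
  assumes v: "Re v > 0" and a0: "a0 > 0" and a: "a \<ge> a0"
  shows "norm (Icos v a y) \<le> integral {0<..} (\<lambda>x. x powr (Re v - 1) * exp (- a0 * sqrt x))"
proof -
  define f where "f = (\<lambda>x. of_real x powr (v - 1) * of_real (exp (- a * sqrt x)) * of_real (cos (x * y)) :: complex)"
  define h where "h = (\<lambda>x::real. x powr (Re v - 1) * exp (- a0 * sqrt x))"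
  have hi: "h integrable_on {0<..}" unfolding h_def using v a0 by (intro int_sqrt) auto
  have le: "norm (f x) \<le> h x" if x: "x \<in> {0<..}" for x
  proof -
    have x0: "x > 0" using x by simp
    have "norm (f x) = x powr (Re v - 1) * exp (- a * sqrt x) * \<bar>cos (x*y)\<bar>"
      unfolding f_def using x0 by (simp add: norm_mult norm_ofreal_powr)
    also have "\<dots> \<le> x powr (Re v - 1) * exp (- a0 * sqrt x) * 1"
      using x0 a by (intro mult_mono abs_cos_le_one) (auto intro!: mult_right_mono)
    finally show ?thesis by (simp add: h_def)
  qed
  have fi: "f integrable_on {0<..}"
  proof -
    have "f absolutely_integrable_on {0<..}"
    proof (rule measurable_bounded_by_integrable_imp_absolutely_integrable[OF _ _ hi le])
      show "f \<in> borel_measurable (lebesgue_on {0<..})"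
        unfolding f_def by (intro continuous_imp_measurable_on_sets_lebesgue continuous_intros) auto
    qed auto
    thus ?thesis using set_lebesgue_integral_eq_integral(1) by blast
  qed
  have "norm (integral {0<..} f) \<le> integral {0<..} h"
    by (rule integral_norm_bound_integral[OF fi hi le])
  thus ?thesis unfolding Icos_def f_def h_def .
qed

theorem mainTheorem2:
  fixes Theta :: "nat \<Rightarrow> complex" and v :: complex and b c lam y :: real
  assumes "Bseq Theta"
    and "Re v > 0" and "c > 0" and "y > 0" and "lam * b > 0"
  defines "IC \<equiv> (\<Sum>k. Theta k / fact k * Icos v (lam * b + c * real k) y)"
  defines "F0 \<equiv> hyp2F3 (v/2) ((v + 1)/2) (1/4) (1/2) (3/4)"
  defines "F1 \<equiv> hyp2F3 ((2 * v+1)/4) ((2 * v+3)/4) (1/2) (3/4) (5/4)"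
  defines "F2 \<equiv> hyp2F3 ((v + 1)/2) ((v + 2)/2) (3/4) (5/4) (3/2)"
  defines "F3 \<equiv> hyp2F3 ((2 * v+3)/4) ((2 * v+5)/4) (5/4) (3/2) (7/4)"
  defines "F \<equiv> (\<lambda>j::nat. if j = 0 then F0 else if j = 1 then F1 else if j = 2 then F2 else F3)"
  shows "summable (\<lambda>k. Theta k / fact k * Icos v (lam * b + c * real k) y)
    \<and> summable (\<lambda>k. Theta k / fact k *
         (\<Sum>l. (-1) ^ l * of_real ((lam * b + c * real k) ^ l) * Gamma (v + of_real (real l / 2))
               / (of_real (y powr (real l / 2)) * fact l)
               * cos (v * of_real pi / 2 + of_real (real l * pi / 4))))
    \<and> IC = of_real y powr (- v) *
         (\<Sum>k. Theta k / fact k *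
         (\<Sum>l. (-1) ^ l * of_real ((lam * b + c * real k) ^ l) * Gamma (v + of_real (real l / 2))
               / (of_real (y powr (real l / 2)) * fact l)
               * cos (v * of_real pi / 2 + of_real (real l * pi / 4))))
    \<and> summable (\<lambda>k. Theta k / fact k *
         (\<Sum>j\<le>3. (-1) ^ j * of_real ((lam * b + c * real k) ^ j) * Gamma (v + of_real (real j / 2))
               / (of_real (y powr (real j / 2)) * fact j)
               * cos (v * of_real pi / 2 + of_real (real j * pi / 4))
               * F j (of_real (- ((lam * b + c * real k) ^ 4 / (64 * y ^ 2))))))
    \<and> IC = of_real y powr (- v) *
         (\<Sum>k. Theta k / fact k *
         (\<Sum>j\<le>3. (-1) ^ j * of_real ((lam * b + c * real k) ^ j) * Gamma (v + of_real (real j / 2))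
               / (of_real (y powr (real j / 2)) * fact j)
               * cos (v * of_real pi / 2 + of_real (real j * pi / 4))
               * F j (of_real (- ((lam * b + c * real k) ^ 4 / (64 * y ^ 2))))))"
proof -
  note Th = assms(1) and v = assms(2) and c = assms(3) and y = assms(4) and lb = assms(5)
  define A where "A = (\<lambda>k::nat. lam * b + c * real k)"
  have A0: "A k \<ge> lam * b" for k using c by (simp add: A_def)
  have Apos: "A k > 0" for k using A0[of k] lb by linarith
  define S where "S = (\<lambda>k. (\<Sum>l. (-1) ^ l * of_real (A k ^ l) * Gamma (v + of_real (real l / 2))
               / (of_real (y powr (real l / 2)) * fact l)
               * cos (v * of_real pi / 2 + of_real (real l * pi / 4))))"
  define R where "R = (\<lambda>k. (\<Sum>j\<le>3. (-1) ^ j * of_real (A k ^ j) * Gamma (v + of_real (real j / 2))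
               / (of_real (y powr (real j / 2)) * fact j)
               * cos (v * of_real pi / 2 + of_real (real j * pi / 4))
               * F j (of_real (- (A k ^ 4 / (64 * y ^ 2))))))"
  have Ico: "Icos v (A k) y = of_real y powr (- v) * S k" for k
    using mainM[OF v Apos y] unfolding S_def by simp
  have RS: "R k = S k" for k
    unfolding R_def S_def
    by (rule mainF[OF v Apos y]) (simp_all add: F_def F0_def F1_def F2_def F3_def)
  have ynz: "(of_real y :: complex) powr (- v) \<noteq> 0" using y by simp
  obtain K where K: "K > 0" "\<And>n. norm (Theta n) \<le> K" using Th by (auto elim: BseqE)
  define B where "B = integral {0<..} (\<lambda>x. x powr (Re v - 1) * exp (- (lam * b) * sqrt x))"
  have s1: "summable (\<lambda>k. Theta k / fact k * Icos v (A k) y)"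
  proof (rule summable_comparison_test'[where N=0])
    show "summable (\<lambda>k. K * B * (inverse (fact k) * 1 ^ k))"
      by (intro summable_mult summable_exp)
    fix k :: nat
    have "norm (Theta k / fact k * Icos v (A k) y) = norm (Theta k) * norm (Icos v (A k) y) / fact k"
      by (simp add: norm_mult norm_divide)
    also have "\<dots> \<le> K * B / fact k"
      using K Icos_bound[OF v lb A0[of k], of y] unfolding B_def
      by (intro divide_right_mono mult_mono) auto
    finally show "norm (Theta k / fact k * Icos v (A k) y) \<le> K * B * (inverse (fact k) * 1 ^ k)"
      by (simp add: divide_inverse)
  qed
  have eq1: "(\<lambda>k. Theta k / fact k * Icos v (A k) y) = (\<lambda>k. of_real y powr (- v) * (Theta k / fact k * S k))"
    by (rule ext) (simp add: Ico mult_ac)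
  have s2: "summable (\<lambda>k. Theta k / fact k * S k)"
  proof -
    have "summable (\<lambda>k. of_real y powr (- v) * (Theta k / fact k * S k))" using s1 unfolding eq1 .
    thus ?thesis using ynz by (subst (asm) summable_cmult_iff) auto
  qed
  have IC: "IC = of_real y powr (- v) * (\<Sum>k. Theta k / fact k * S k)"
  proof -
    have "IC = (\<Sum>k. Theta k / fact k * Icos v (A k) y)" by (simp add: IC_def A_def)
    also have "\<dots> = (\<Sum>k. of_real y powr (- v) * (Theta k / fact k * S k))" by (simp only: eq1)
    also have "\<dots> = of_real y powr (- v) * (\<Sum>k. Theta k / fact k * S k)" by (rule suminf_mult[OF s2])
    finally show ?thesis .
  qed
  have RS': "(\<lambda>k. Theta k / fact k * R k) = (\<lambda>k. Theta k / fact k * S k)" by (simp add: RS)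
  show ?thesis
    using s1 s2 IC RS' unfolding A_def S_def R_def by simp
qed

end
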